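(* Let $F$, $\hat F$, $\alpha_1,\dots,\alpha_n$ and $\pi: H_1(\hat F,\mathbb{Z})\to H_1(F,\mathbb{Z})$ be as in the context. For every automorphism $\varphi: H_1(F,\mathbb{Z})\to H_1(F,\mathbb{Z})$ there is an automorphism $\tilde\varphi: H_1(\hat F,\mathbb{Z})\to H_1(\hat F,\mathbb{Z})$ with $\pi\circ\tilde\varphi=\varphi\circ\pi$ and $\tilde\varphi\left(\sum_{i=1}^n\alpha_i\right)=\sum_{i=1}^n\alpha_i$.
   Context: $F$ is a closed connected non-orientable surface with Euler characteristic $\chi(F)=2-n$, $n\ge 1$, written as a connected sum of $n$ projective planes. $\hat F$ is obtained from $F$ by deleting the interior of an embedded disc, so $\hat F$ is a boundary-connected sum of $n$ Möbius bands $\mathcal{M}_1,\dots,\mathcal{M}_n$. Let $\gamma_i$ be the core (central) circle of $\mathcal{M}_i$ and $\alpha_i=[\gamma_i]\in H_1(\hat F,\mathbb{Z})$ (for some choice of orientation). Then $H_1(\hat F,\mathbb{Z})\cong\mathbb{Z}^n$ with basis $\alpha_1,\dots,\alpha_n$, and the map $\pi:H_1(\hat F,\mathbb{Z})\to H_1(F,\mathbb{Z})$ induced by inclusion is surjective with kernel generated by $2\sum_i\alpha_i$ (the class of the boundary circle), so $H_1(F,\mathbb{Z})=H_1(\hat F,\mathbb{Z})/\langle 2\sum_i\alpha_i\rangle$. *)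

theory Defs
  imports "HOL-Algebra.Algebra"
begin

text \<open>H_1(F^,Z) = Z^n, realised as integer vectors
  nat => int supported on {0..<n}; the basis vector alpha i (i < n) is the class
  of the core circle of the i-th Moebius band.\<close>

definition H1hat :: "nat \<Rightarrow> (nat \<Rightarrow> int) monoid" where
  "H1hat n = \<lparr>carrier = {v. \<forall>i\<ge>n. v i = 0}, monoid.mult = (\<lambda>x y. (\<lambda>i. x i + y i)), one = (\<lambda>i. 0)\<rparr>"

definition alpha :: "nat \<Rightarrow> nat \<Rightarrow> int" where
  "alpha i = (\<lambda>j. if j = i then 1 else 0)"

definition sigma :: "nat \<Rightarrow> nat \<Rightarrow> int" where
  "sigma n = (\<lambda>j. \<Sum>i<n. alpha i j)"

definition bdry_subgroup :: "nat \<Rightarrow> (nat \<Rightarrow> int) set" where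
  "bdry_subgroup n = {(\<lambda>j. k * 2 * sigma n j) | k::int. True}"

definition H1F :: "nat \<Rightarrow> (nat \<Rightarrow> int) set monoid" where
  "H1F n = H1hat n Mod bdry_subgroup n"

definition proj :: "nat \<Rightarrow> (nat \<Rightarrow> int) \<Rightarrow> (nat \<Rightarrow> int) set" where
  "proj n v = bdry_subgroup n #>\<^bsub>H1hat n\<^esub> v"

end

theory Submission
  imports Defs
begin

lemma sigma_eq: "sigma n j = (if j < n then 1 else 0)"
  unfolding sigma_def alpha_def by (simp add: sum.delta)

lemma proj_eq_set: "proj n v = {(\<lambda>j. k * 2 * sigma n j + v j) | k. True}"
  unfolding proj_def r_coset_def bdry_subgroup_def H1hat_def by auto

definition rel :: "nat \<Rightarrow> (nat \<Rightarrow> int) \<Rightarrow> (nat \<Rightarrow> int) \<Rightarrow> bool" where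
  "rel n a b \<longleftrightarrow> (\<exists>k. \<forall>j. a j = b j + 2 * k * sigma n j)"

lemma proj_iff: "proj n a = proj n b \<longleftrightarrow> rel n a b"
proof
  assume h: "proj n a = proj n b"
  have "b \<in> proj n b" unfolding proj_eq_set by (rule CollectI, rule exI[of _ 0], auto)
  then have "b \<in> proj n a" using h by simp
  then obtain k where "b = (\<lambda>j. k * 2 * sigma n j + a j)" unfolding proj_eq_set by auto
  then show "rel n a b" unfolding rel_def by (intro exI[of _ "-k"]) auto
next
  assume "rel n a b"
  then obtain k where k: "\<And>j. a j = b j + 2 * k * sigma n j" unfolding rel_def by auto
  show "proj n a = proj n b" unfolding proj_eq_set
  proof (rule Set.set_eqI, rule iffI)
    fix x assume "x \<in> {(\<lambda>j. m * 2 * sigma n j + a j) |m. True}"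
    then obtain m where "x = (\<lambda>j. m * 2 * sigma n j + a j)" by auto
    then have "x = (\<lambda>j. (m+k) * 2 * sigma n j + b j)" by (auto simp: k algebra_simps)
    then show "x \<in> {(\<lambda>j. m * 2 * sigma n j + b j) |m. True}" by blast
  next
    fix x assume "x \<in> {(\<lambda>j. m * 2 * sigma n j + b j) |m. True}"
    then obtain m where "x = (\<lambda>j. m * 2 * sigma n j + b j)" by auto
    then have "x = (\<lambda>j. (m-k) * 2 * sigma n j + a j)" by (auto simp: k algebra_simps)
    then show "x \<in> {(\<lambda>j. m * 2 * sigma n j + a j) |m. True}" by blast
  qed
qed

lemma carrier_H1hat: "v \<in> carrier (H1hat n) \<longleftrightarrow> (\<forall>i\<ge>n. v i = 0)"
  unfolding H1hat_def by simp

lemma carrier_H1F: "carrier (H1F n) = proj n ` carrier (H1hat n)"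
  unfolding H1F_def FactGroup_def RCOSETS_def proj_def by auto

lemma mult_H1F: "proj n a \<otimes>\<^bsub>H1F n\<^esub> proj n b = proj n (\<lambda>j. a j + b j)"
proof -
  have "proj n a \<otimes>\<^bsub>H1F n\<^esub> proj n b = proj n a <#>\<^bsub>H1hat n\<^esub> proj n b"
    unfolding H1F_def FactGroup_def by simp
  also have "\<dots> = proj n (\<lambda>j. a j + b j)"
  proof (rule Set.set_eqI, rule iffI)
    fix x assume "x \<in> proj n a <#>\<^bsub>H1hat n\<^esub> proj n b"
    then obtain k m where "x = (\<lambda>j. (k * 2 * sigma n j + a j) + (m * 2 * sigma n j + b j))"
      unfolding set_mult_def proj_eq_set H1hat_def by auto
    then have "x = (\<lambda>j. (k+m) * 2 * sigma n j + (a j + b j))" by (auto simp: algebra_simps)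
    then show "x \<in> proj n (\<lambda>j. a j + b j)" unfolding proj_eq_set by blast
  next
    fix x assume "x \<in> proj n (\<lambda>j. a j + b j)"
    then obtain k where x: "x = (\<lambda>j. k * 2 * sigma n j + (a j + b j))" unfolding proj_eq_set by auto
    have 1: "(\<lambda>j. k * 2 * sigma n j + a j) \<in> proj n a" unfolding proj_eq_set by auto
    have 2: "(\<lambda>j. 0 * 2 * sigma n j + b j) \<in> proj n b" unfolding proj_eq_set by blast
    have "x = (\<lambda>j. k * 2 * sigma n j + a j) \<otimes>\<^bsub>H1hat n\<^esub> (\<lambda>j. 0 * 2 * sigma n j + b j)"
      unfolding x H1hat_def by (auto simp: algebra_simps)
    then show "x \<in> proj n a <#>\<^bsub>H1hat n\<^esub> proj n b" unfolding set_mult_def using 1 2 by blast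
  qed
  finally show ?thesis .
qed

lemma rel_refl: "rel n a a" unfolding rel_def by (rule exI[of _ 0]) simp
lemma rel_sym: "rel n a b \<Longrightarrow> rel n b a" unfolding rel_def
  by (metis add_diff_cancel_right' diff_add_cancel mult_minus_left mult_minus_right minus_mult_commute add.commute diff_conv_add_uminus)
lemma rel_trans: "rel n a b \<Longrightarrow> rel n b c \<Longrightarrow> rel n a c" unfolding rel_def
proof -
  assume "\<exists>k. \<forall>j. a j = b j + 2 * k * sigma n j" "\<exists>k. \<forall>j. b j = c j + 2 * k * sigma n j"
  then obtain k m where "\<And>j. a j = b j + 2 * k * sigma n j" "\<And>j. b j = c j + 2 * m * sigma n j" by blast
  then show "\<exists>k. \<forall>j. a j = c j + 2 * k * sigma n j" by (intro exI[of _ "k+m"]) (auto simp: algebra_simps)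
qed
lemma rel_add: "rel n a b \<Longrightarrow> rel n c d \<Longrightarrow> rel n (\<lambda>j. a j + c j) (\<lambda>j. b j + d j)" unfolding rel_def
proof -
  assume "\<exists>k. \<forall>j. a j = b j + 2 * k * sigma n j" "\<exists>k. \<forall>j. c j = d j + 2 * k * sigma n j"
  then obtain k m where "\<And>j. a j = b j + 2 * k * sigma n j" "\<And>j. c j = d j + 2 * m * sigma n j" by blast
  then show "\<exists>k. \<forall>j. a j + c j = b j + d j + 2 * k * sigma n j" by (intro exI[of _ "k+m"]) (auto simp: algebra_simps)
qed
lemma rel_scale: "rel n a b \<Longrightarrow> rel n (\<lambda>j. c * a j) (\<lambda>j. c * b j)" unfolding rel_def
proof -
  assume "\<exists>k. \<forall>j. a j = b j + 2 * k * sigma n j"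
  then obtain k where "\<And>j. a j = b j + 2 * k * sigma n j" by blast
  then show "\<exists>k. \<forall>j. c * a j = c * b j + 2 * k * sigma n j" by (intro exI[of _ "c*k"]) (auto simp: algebra_simps)
qed
lemma rel_neg: "rel n (\<lambda>j. a j + b j) (\<lambda>j. 0) \<Longrightarrow> rel n a (\<lambda>j. - b j)"
  unfolding rel_def by (metis add.commute add_0 eq_neg_iff_add_eq_0 add_diff_cancel_left' diff_conv_add_uminus)

lemma C_add: "a \<in> carrier (H1hat n) \<Longrightarrow> b \<in> carrier (H1hat n) \<Longrightarrow> (\<lambda>j. a j + b j) \<in> carrier (H1hat n)"
  by (simp add: carrier_H1hat)
lemma C_scale: "a \<in> carrier (H1hat n) \<Longrightarrow> (\<lambda>j. c * a j) \<in> carrier (H1hat n)"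
  by (simp add: carrier_H1hat)
lemma C_neg: "a \<in> carrier (H1hat n) \<Longrightarrow> (\<lambda>j. - a j) \<in> carrier (H1hat n)"
  by (simp add: carrier_H1hat)
lemma C_zero: "(\<lambda>j. 0) \<in> carrier (H1hat n)"
  by (simp add: carrier_H1hat)
lemma C_sigma: "sigma n \<in> carrier (H1hat n)"
  by (simp add: carrier_H1hat sigma_eq)
lemma C_alpha: "i < n \<Longrightarrow> alpha i \<in> carrier (H1hat n)"
  by (simp add: carrier_H1hat alpha_def)
lemma C_sum: "finite I \<Longrightarrow> (\<And>i. i \<in> I \<Longrightarrow> a i \<in> carrier (H1hat n)) \<Longrightarrow> (\<lambda>j. \<Sum>i\<in>I. c i * a i j) \<in> carrier (H1hat n)"
  by (simp add: carrier_H1hat)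

lemma proj_C: "a \<in> carrier (H1hat n) \<Longrightarrow> proj n a \<in> carrier (H1F n)"
  by (simp add: carrier_H1F)

definition lin :: "nat \<Rightarrow> (nat \<Rightarrow> nat \<Rightarrow> int) \<Rightarrow> (nat \<Rightarrow> int) \<Rightarrow> (nat \<Rightarrow> int)" where
  "lin n u v = (\<lambda>j. v 0 * sigma n j + (\<Sum>i\<in>{1..<n}. (v i - v 0) * u i j))"

lemma lin_C: "(\<And>i. i \<in> {1..<n} \<Longrightarrow> u i \<in> carrier (H1hat n)) \<Longrightarrow> lin n u v \<in> carrier (H1hat n)"
  unfolding lin_def by (simp add: carrier_H1hat sigma_eq)

lemma lin_sigma: "n \<ge> 1 \<Longrightarrow> lin n u (sigma n) = sigma n"
  unfolding lin_def by (simp add: sigma_eq fun_eq_iff)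

lemma lin_lin: "lin n u (\<lambda>j. a j + c * b j) = (\<lambda>j. lin n u a j + c * lin n u b j)"
proof (rule ext)
  fix j
  have "(\<Sum>i\<in>{1..<n}. (a i + c * b i - (a 0 + c * b 0)) * u i j)
      = (\<Sum>i\<in>{1..<n}. (a i - a 0) * u i j + c * ((b i - b 0) * u i j))"
    by (rule sum.cong) (auto simp: algebra_simps)
  also have "\<dots> = (\<Sum>i\<in>{1..<n}. (a i - a 0) * u i j) + c * (\<Sum>i\<in>{1..<n}. (b i - b 0) * u i j)"
    by (simp add: sum.distrib sum_distrib_left)
  finally show "lin n u (\<lambda>j. a j + c * b j) j = lin n u a j + c * lin n u b j"
    unfolding lin_def by (simp add: algebra_simps)
qed

lemma lin_hom: "(\<And>i. i \<in> {1..<n} \<Longrightarrow> u i \<in> carrier (H1hat n)) \<Longrightarrow> lin n u \<in> hom (H1hat n) (H1hat n)"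
  unfolding hom_def using lin_C lin_lin[of n u _ 1] by (auto simp: H1hat_def)

lemma decomp: "n \<ge> 1 \<Longrightarrow> v \<in> carrier (H1hat n) \<Longrightarrow>
   v = (\<lambda>j. v 0 * sigma n j + (\<Sum>i\<in>{1..<n}. (v i - v 0) * alpha i j))"
proof (rule ext)
  fix j assume n: "n \<ge> 1" and v: "v \<in> carrier (H1hat n)"
  have "(\<Sum>i\<in>{1..<n}. (v i - v 0) * alpha i j) = (\<Sum>i\<in>{1..<n}. if i = j then v j - v 0 else 0)"
    by (rule sum.cong) (auto simp: alpha_def)
  also have "\<dots> = (if j \<in> {1..<n} then v j - v 0 else 0)"
    by (simp add: sum.delta')
  finally show "v j = v 0 * sigma n j + (\<Sum>i\<in>{1..<n}. (v i - v 0) * alpha i j)"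
    using n v by (cases "j = 0") (auto simp: sigma_eq carrier_H1hat)
qed


context
  fixes n :: nat and \<phi> :: "(nat \<Rightarrow> int) set \<Rightarrow> (nat \<Rightarrow> int) set" and F :: "(nat \<Rightarrow> int) \<Rightarrow> (nat \<Rightarrow> int)"
  assumes n1: "n \<ge> 1" and hom: "\<phi> \<in> hom (H1F n) (H1F n)"
    and inj: "inj_on \<phi> (carrier (H1F n))"
    and FC: "\<And>a. a \<in> carrier (H1hat n) \<Longrightarrow> F a \<in> carrier (H1hat n)"
    and Fp: "\<And>a. a \<in> carrier (H1hat n) \<Longrightarrow> \<phi> (proj n a) = proj n (F a)"
begin

lemma F_add: "a \<in> carrier (H1hat n) \<Longrightarrow> b \<in> carrier (H1hat n) \<Longrightarrow>
  rel n (F (\<lambda>j. a j + b j)) (\<lambda>j. F a j + F b j)"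
proof -
  assume a: "a \<in> carrier (H1hat n)" and b: "b \<in> carrier (H1hat n)"
  have "proj n (F (\<lambda>j. a j + b j)) = \<phi> (proj n (\<lambda>j. a j + b j))" using Fp C_add[OF a b] by simp
  also have "\<dots> = \<phi> (proj n a \<otimes>\<^bsub>H1F n\<^esub> proj n b)" by (simp add: mult_H1F)
  also have "\<dots> = \<phi> (proj n a) \<otimes>\<^bsub>H1F n\<^esub> \<phi> (proj n b)"
    using hom_mult[OF hom proj_C[OF a] proj_C[OF b]] .
  also have "\<dots> = proj n (\<lambda>j. F a j + F b j)" using Fp a b by (simp add: mult_H1F)
  finally show ?thesis by (simp add: proj_iff)
qed

lemma F_cong: "a \<in> carrier (H1hat n) \<Longrightarrow> b \<in> carrier (H1hat n) \<Longrightarrow> rel n a b \<Longrightarrow> rel n (F a) (F b)"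
proof -
  assume a: "a \<in> carrier (H1hat n)" and b: "b \<in> carrier (H1hat n)" and r: "rel n a b"
  have "proj n a = proj n b" using r by (simp add: proj_iff)
  then have "proj n (F a) = proj n (F b)" using Fp[OF a] Fp[OF b] by simp
  then show ?thesis by (simp add: proj_iff)
qed

lemma F_zero: "rel n (F (\<lambda>j. 0)) (\<lambda>j. 0)"
proof -
  have "rel n (F (\<lambda>j. 0)) (\<lambda>j. F (\<lambda>j. 0) j + F (\<lambda>j. 0) j)"
    using F_add[OF C_zero C_zero] by simp
  then obtain k where hk: "\<And>j. F (\<lambda>j. 0) j = F (\<lambda>j. 0) j + F (\<lambda>j. 0) j + 2 * k * sigma n j"
    unfolding rel_def by blast
  show ?thesis unfolding rel_def
  proof (intro exI[of _ "-k"] allI)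
    fix j
    show "F (\<lambda>j. 0) j = 0 + 2 * - k * sigma n j" using hk[of j] by (simp add: algebra_simps eq_neg_iff_add_eq_0)
  qed
qed

lemma F_neg: "a \<in> carrier (H1hat n) \<Longrightarrow> rel n (F (\<lambda>j. - a j)) (\<lambda>j. - F a j)"
proof -
  assume a: "a \<in> carrier (H1hat n)"
  have "rel n (F (\<lambda>j. - a j + a j)) (\<lambda>j. F (\<lambda>j. - a j) j + F a j)"
    using F_add[OF C_neg[OF a] a] .
  then have "rel n (F (\<lambda>j. 0)) (\<lambda>j. F (\<lambda>j. - a j) j + F a j)" by simp
  then have "rel n (\<lambda>j. F (\<lambda>j. - a j) j + F a j) (\<lambda>j. 0)"
    using F_zero by (meson rel_sym rel_trans)
  then show ?thesis by (rule rel_neg)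
qed

lemma F_scale_nat: "a \<in> carrier (H1hat n) \<Longrightarrow> rel n (F (\<lambda>j. int m * a j)) (\<lambda>j. int m * F a j)"
proof (induction m)
  case 0
  then show ?case using F_zero by simp
next
  case (Suc m)
  have e: "(\<lambda>j. int (Suc m) * a j) = (\<lambda>j. int m * a j + a j)" by (auto simp: algebra_simps)
  have "rel n (F (\<lambda>j. int m * a j + a j)) (\<lambda>j. F (\<lambda>j. int m * a j) j + F a j)"
    using F_add[OF C_scale[OF Suc.prems] Suc.prems] .
  moreover have "rel n (\<lambda>j. F (\<lambda>j. int m * a j) j + F a j) (\<lambda>j. int m * F a j + F a j)"
    using rel_add[OF Suc.IH[OF Suc.prems] rel_refl] .
  ultimately have "rel n (F (\<lambda>j. int m * a j + a j)) (\<lambda>j. int m * F a j + F a j)" by (rule rel_trans)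
  then show ?case unfolding e by (simp add: algebra_simps)
qed

lemma F_scale: "a \<in> carrier (H1hat n) \<Longrightarrow> rel n (F (\<lambda>j. c * a j)) (\<lambda>j. c * F a j)"
proof (cases "c \<ge> 0")
  case True
  assume a: "a \<in> carrier (H1hat n)"
  obtain m where "c = int m" using True nonneg_int_cases by blast
  then show ?thesis using F_scale_nat[OF a] by simp
next
  case False
  assume a: "a \<in> carrier (H1hat n)"
  obtain m where c: "c = - int m" using False by (metis nonpos_int_cases linorder_linear)
  have e: "(\<lambda>j. c * a j) = (\<lambda>j. - (int m * a j))" by (simp add: c)
  have "rel n (F (\<lambda>j. - (int m * a j))) (\<lambda>j. - F (\<lambda>j. int m * a j) j)"
    using F_neg[OF C_scale[OF a]] .
  moreover have "rel n (\<lambda>j. - F (\<lambda>j. int m * a j) j) (\<lambda>j. - (int m * F a j))"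
    using rel_scale[OF F_scale_nat[OF a], of "-1"] by simp
  ultimately have "rel n (F (\<lambda>j. - (int m * a j))) (\<lambda>j. - (int m * F a j))" by (rule rel_trans)
  then show ?thesis by (simp add: c)
qed

lemma F_sum: "finite I \<Longrightarrow> (\<And>i. i \<in> I \<Longrightarrow> a i \<in> carrier (H1hat n)) \<Longrightarrow>
  rel n (F (\<lambda>j. \<Sum>i\<in>I. c i * a i j)) (\<lambda>j. \<Sum>i\<in>I. c i * F (a i) j)"
proof (induction I rule: finite_induct)
  case empty
  then show ?case using F_zero by simp
next
  case (insert x I)
  have ax: "a x \<in> carrier (H1hat n)" using insert.prems by simp
  have aI: "\<And>i. i \<in> I \<Longrightarrow> a i \<in> carrier (H1hat n)" using insert.prems by simp
  have "rel n (F (\<lambda>j. c x * a x j + (\<Sum>i\<in>I. c i * a i j)))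
     (\<lambda>j. F (\<lambda>j. c x * a x j) j + F (\<lambda>j. \<Sum>i\<in>I. c i * a i j) j)"
    using F_add[OF C_scale[OF ax] C_sum[OF insert.hyps(1) aI]] .
  moreover have "rel n (\<lambda>j. F (\<lambda>j. c x * a x j) j + F (\<lambda>j. \<Sum>i\<in>I. c i * a i j) j)
     (\<lambda>j. c x * F (a x) j + (\<Sum>i\<in>I. c i * F (a i) j))"
    using rel_add[OF F_scale[OF ax] insert.IH[OF aI]] .
  ultimately show ?case using insert.hyps by (simp add: rel_trans)
qed

lemma F_sigma: "rel n (F (sigma n)) (sigma n)"
proof -
  have s: "sigma n \<in> carrier (H1hat n)" by (rule C_sigma)
  have "rel n (F (\<lambda>j. sigma n j + sigma n j)) (\<lambda>j. F (sigma n) j + F (sigma n) j)"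
    using F_add[OF s s] .
  moreover have "rel n (\<lambda>j. sigma n j + sigma n j) (\<lambda>j. 0)"
    unfolding rel_def by (intro exI[of _ 1]) simp
  then have "rel n (F (\<lambda>j. sigma n j + sigma n j)) (F (\<lambda>j. 0))"
    by (rule F_cong[OF C_add[OF s s] C_zero])
  ultimately have "rel n (\<lambda>j. F (sigma n) j + F (sigma n) j) (\<lambda>j. 0)"
    using F_zero by (meson rel_sym rel_trans)
  then obtain k where k: "\<And>j. F (sigma n) j + F (sigma n) j = 2 * k * sigma n j"
    unfolding rel_def by auto
  have k': "F (sigma n) j = k * sigma n j" for j
  proof -
    have "F (sigma n) j + F (sigma n) j = 2 * (k * sigma n j)" using k[of j] by (simp add: mult.assoc)
    then show ?thesis by linarith
  qed
  show ?thesis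
  proof (cases "even k")
    case True
    then obtain m where "k = 2 * m" by blast
    then have "rel n (F (sigma n)) (\<lambda>j. 0)" unfolding rel_def using k'
      by (intro exI[of _ m]) simp
    then have "proj n (F (sigma n)) = proj n (F (\<lambda>j. 0))"
      using F_zero proj_iff by (metis rel_sym rel_trans)
    then have "\<phi> (proj n (sigma n)) = \<phi> (proj n (\<lambda>j. 0))" using Fp s C_zero by simp
    then have "proj n (sigma n) = proj n (\<lambda>j. 0)"
      using inj proj_C[OF s] proj_C[OF C_zero] by (meson inj_on_def)
    then obtain m' where "\<And>j. sigma n j = 2 * m' * sigma n j" unfolding proj_iff rel_def by auto
    from this[of 0] n1 have "1 = 2 * m'" by (simp add: sigma_eq)
    then have False by presburger
    then show ?thesis ..
  next
    case False
    then obtain m where "k = 2 * m + 1" by (metis oddE)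
    then show ?thesis unfolding rel_def using k'
      by (intro exI[of _ m]) (simp add: algebra_simps)
  qed
qed

lemma F_lin: "v \<in> carrier (H1hat n) \<Longrightarrow> rel n (F v) (lin n (\<lambda>i. F (alpha i)) v)"
proof -
  assume v: "v \<in> carrier (H1hat n)"
  have al: "\<And>i. i \<in> {1..<n} \<Longrightarrow> alpha i \<in> carrier (H1hat n)" using C_alpha by simp
  let ?S = "\<lambda>j. \<Sum>i\<in>{1..<n}. (v i - v 0) * alpha i j"
  have "rel n (F (\<lambda>j. v 0 * sigma n j + ?S j)) (\<lambda>j. F (\<lambda>j. v 0 * sigma n j) j + F ?S j)"
    using F_add[OF C_scale[OF C_sigma] C_sum[where I="{1..<n}" and a=alpha and c="\<lambda>i. v i - v 0", OF finite_atLeastLessThan al]] .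
  moreover have "rel n (\<lambda>j. F (\<lambda>j. v 0 * sigma n j) j + F ?S j)
     (\<lambda>j. v 0 * F (sigma n) j + (\<Sum>i\<in>{1..<n}. (v i - v 0) * F (alpha i) j))"
    using rel_add[OF F_scale[OF C_sigma] F_sum[where I="{1..<n}" and a=alpha and c="\<lambda>i. v i - v 0", OF finite_atLeastLessThan al]] .
  moreover have "rel n (\<lambda>j. v 0 * F (sigma n) j + (\<Sum>i\<in>{1..<n}. (v i - v 0) * F (alpha i) j))
      (lin n (\<lambda>i. F (alpha i)) v)"
    unfolding lin_def using rel_add[OF rel_scale[OF F_sigma] rel_refl] .
  ultimately have "rel n (F (\<lambda>j. v 0 * sigma n j + ?S j)) (lin n (\<lambda>i. F (alpha i)) v)"
    by (meson rel_trans)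
  moreover have e: "(\<lambda>j. v 0 * sigma n j + ?S j) = v" by (rule decomp[OF n1 v, symmetric])
  ultimately show ?thesis by simp
qed

end


lemma lift:
  assumes n1: "n \<ge> 1" and hom: "\<phi> \<in> hom (H1F n) (H1F n)" and inj: "inj_on \<phi> (carrier (H1F n))"
  shows "\<exists>u. (\<forall>i\<in>{1..<n}. u i \<in> carrier (H1hat n)) \<and>
             (\<forall>v\<in>carrier (H1hat n). proj n (lin n u v) = \<phi> (proj n v))"
proof -
  have "\<forall>a\<in>carrier (H1hat n). \<exists>w. w \<in> carrier (H1hat n) \<and> \<phi> (proj n a) = proj n w"
  proof
    fix a assume a: "a \<in> carrier (H1hat n)"
    have "\<phi> (proj n a) \<in> carrier (H1F n)" using hom_in_carrier[OF hom proj_C[OF a]] .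
    then show "\<exists>w. w \<in> carrier (H1hat n) \<and> \<phi> (proj n a) = proj n w" unfolding carrier_H1F by auto
  qed
  then obtain F where F: "\<forall>a\<in>carrier (H1hat n). F a \<in> carrier (H1hat n) \<and> \<phi> (proj n a) = proj n (F a)"
    by metis
  have FC: "\<And>a. a \<in> carrier (H1hat n) \<Longrightarrow> F a \<in> carrier (H1hat n)" using F by blast
  have Fp: "\<And>a. a \<in> carrier (H1hat n) \<Longrightarrow> \<phi> (proj n a) = proj n (F a)" using F by blast
  show ?thesis
  proof (intro exI[of _ "\<lambda>i. F (alpha i)"] conjI ballI)
    fix i assume "i \<in> {1..<n}"
    then show "F (alpha i) \<in> carrier (H1hat n)" using FC C_alpha by simp
  next
    fix v assume v: "v \<in> carrier (H1hat n)"
    have "rel n (F v) (lin n (\<lambda>i. F (alpha i)) v)" using F_lin[OF n1 hom inj FC Fp v] by blast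
    then have "proj n (lin n (\<lambda>i. F (alpha i)) v) = proj n (F v)" by (simp add: proj_iff rel_sym)
    also have "\<dots> = \<phi> (proj n v)" using Fp[OF v] by simp
    finally show "proj n (lin n (\<lambda>i. F (alpha i)) v) = \<phi> (proj n v)" .
  qed
qed

theorem lemma2p1:
  fixes n :: nat and \<phi> :: "(nat \<Rightarrow> int) set \<Rightarrow> (nat \<Rightarrow> int) set"
  assumes "n \<ge> 1"
    and "\<phi> \<in> iso (H1F n) (H1F n)"
  shows "\<exists>\<psi> \<in> iso (H1hat n) (H1hat n).
           (\<forall>v \<in> carrier (H1hat n). proj n (\<psi> v) = \<phi> (proj n v))
           \<and> \<psi> (sigma n) = sigma n"
proof -
  note n1 = assms(1)
  have hom: "\<phi> \<in> hom (H1F n) (H1F n)" and bij: "bij_betw \<phi> (carrier (H1F n)) (carrier (H1F n))"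
    using assms(2) by (auto simp: iso_def)
  have inj: "inj_on \<phi> (carrier (H1F n))" using bij by (simp add: bij_betw_def)
  define \<phi>' where "\<phi>' = inv_into (carrier (H1F n)) \<phi>"
  have bij': "bij_betw \<phi>' (carrier (H1F n)) (carrier (H1F n))"
    unfolding \<phi>'_def using bij by (rule bij_betw_inv_into)
  have inj': "inj_on \<phi>' (carrier (H1F n))" using bij' by (simp add: bij_betw_def)
  have closedF: "x \<otimes>\<^bsub>H1F n\<^esub> y \<in> carrier (H1F n)" if xin: "x \<in> carrier (H1F n)" and yin: "y \<in> carrier (H1F n)" for x y
  proof -
    obtain a where "a \<in> carrier (H1hat n)" "x = proj n a"
      using xin unfolding carrier_H1F by blast
    moreover obtain b where "b \<in> carrier (H1hat n)" "y = proj n b"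
      using yin unfolding carrier_H1F by blast
    ultimately show ?thesis by (simp add: mult_H1F proj_C C_add)
  qed
  have hom': "\<phi>' \<in> hom (H1F n) (H1F n)"
  proof (rule homI)
    fix x assume "x \<in> carrier (H1F n)"
    then show "\<phi>' x \<in> carrier (H1F n)" using bij' bij_betwE by blast
  next
    fix x y assume x: "x \<in> carrier (H1F n)" and y: "y \<in> carrier (H1F n)"
    have x': "\<phi>' x \<in> carrier (H1F n)" and y': "\<phi>' y \<in> carrier (H1F n)" using x y bij' bij_betwE by blast+
    show "\<phi>' (x \<otimes>\<^bsub>H1F n\<^esub> y) = \<phi>' x \<otimes>\<^bsub>H1F n\<^esub> \<phi>' y"
      unfolding \<phi>'_def
    proof (rule inv_into_f_eq[OF inj])
      show "inv_into (carrier (H1F n)) \<phi> x \<otimes>\<^bsub>H1F n\<^esub> inv_into (carrier (H1F n)) \<phi> y \<in> carrier (H1F n)"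
        using closedF x' y' unfolding \<phi>'_def by blast
      have "x \<in> \<phi> ` carrier (H1F n)" "y \<in> \<phi> ` carrier (H1F n)" using x y bij by (auto simp: bij_betw_def)
      then show "\<phi> (inv_into (carrier (H1F n)) \<phi> x \<otimes>\<^bsub>H1F n\<^esub> inv_into (carrier (H1F n)) \<phi> y) = x \<otimes>\<^bsub>H1F n\<^esub> y"
        using hom_mult[OF hom x'[unfolded \<phi>'_def] y'[unfolded \<phi>'_def]] by (simp add: f_inv_into_f)
    qed
  qed
  obtain u where uC: "\<forall>i\<in>{1..<n}. u i \<in> carrier (H1hat n)"
    and u: "\<forall>v\<in>carrier (H1hat n). proj n (lin n u v) = \<phi> (proj n v)"
    using lift[OF n1 hom inj] by blast
  obtain u' where u'C: "\<forall>i\<in>{1..<n}. u' i \<in> carrier (H1hat n)"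
    and u': "\<forall>v\<in>carrier (H1hat n). proj n (lin n u' v) = \<phi>' (proj n v)"
    using lift[OF n1 hom' inj'] by blast
  let ?\<psi> = "lin n u" and ?\<chi> = "lin n u'"
  have \<psi>C: "\<And>v. ?\<psi> v \<in> carrier (H1hat n)" using lin_C[of n u] uC by simp
  have \<chi>C: "\<And>v. ?\<chi> v \<in> carrier (H1hat n)" using lin_C[of n u'] u'C by simp
  have RL: "rel n (?\<psi> (?\<chi> w)) w" if w: "w \<in> carrier (H1hat n)" for w
  proof -
    have pw: "proj n w \<in> \<phi> ` carrier (H1F n)" using proj_C[OF w] bij by (auto simp: bij_betw_def)
    have "proj n (?\<psi> (?\<chi> w)) = \<phi> (proj n (?\<chi> w))" using u[rule_format, OF \<chi>C] .
    also have "\<dots> = \<phi> (\<phi>' (proj n w))" using u'[rule_format, OF w] by simp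
    also have "\<dots> = proj n w" unfolding \<phi>'_def using pw by (rule f_inv_into_f)
    finally show ?thesis by (simp add: proj_iff)
  qed
  have LR: "rel n (?\<chi> (?\<psi> w)) w" if w: "w \<in> carrier (H1hat n)" for w
  proof -
    have "proj n (?\<chi> (?\<psi> w)) = \<phi>' (proj n (?\<psi> w))" using u'[rule_format, OF \<psi>C] .
    also have "\<dots> = \<phi>' (\<phi> (proj n w))" using u[rule_format, OF w] by simp
    also have "\<dots> = proj n w" unfolding \<phi>'_def using inj proj_C[OF w] by (rule inv_into_f_f)
    finally show ?thesis by (simp add: proj_iff)
  qed
  have sig: "?\<psi> (sigma n) = sigma n" "?\<chi> (sigma n) = sigma n" using lin_sigma[OF n1] by auto
  have s0: "sigma n 0 = 1" using n1 by (simp add: sigma_eq)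
  have surj: "?\<psi> ` carrier (H1hat n) = carrier (H1hat n)"
  proof
    show "?\<psi> ` carrier (H1hat n) \<subseteq> carrier (H1hat n)" using \<psi>C by blast
  next
    show "carrier (H1hat n) \<subseteq> ?\<psi> ` carrier (H1hat n)"
    proof
      fix w assume w: "w \<in> carrier (H1hat n)"
      obtain k where k: "\<And>j. ?\<psi> (?\<chi> w) j = w j + 2 * k * sigma n j" using RL[OF w] unfolding rel_def by blast
      have "?\<psi> (?\<chi> (\<lambda>j. w j + (- 2 * k) * sigma n j)) = (\<lambda>j. ?\<psi> (?\<chi> w) j + (- 2 * k) * sigma n j)"
      proof -
        have e1: "?\<chi> (\<lambda>j. w j + (- 2 * k) * sigma n j) = (\<lambda>j. ?\<chi> w j + (- 2 * k) * sigma n j)"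
          using lin_lin[of n u' w "-2*k" "sigma n"] sig(2) by simp
        have e2: "?\<psi> (\<lambda>j. ?\<chi> w j + (- 2 * k) * sigma n j) = (\<lambda>j. ?\<psi> (?\<chi> w) j + (- 2 * k) * sigma n j)"
          using lin_lin[of n u "?\<chi> w" "-2*k" "sigma n"] sig(1) by simp
        show ?thesis using e1 e2 by simp
      qed
      also have "\<dots> = w" by (auto simp: k algebra_simps)
      finally have "?\<psi> (?\<chi> (\<lambda>j. w j + (- 2 * k) * sigma n j)) = w" .
      then show "w \<in> ?\<psi> ` carrier (H1hat n)" by (rule image_eqI[OF sym \<chi>C])
    qed
  qed
  have injp: "inj_on ?\<psi> (carrier (H1hat n))"
  proof (rule inj_onI)
    fix a b assume a: "a \<in> carrier (H1hat n)" and b: "b \<in> carrier (H1hat n)" and e: "?\<psi> a = ?\<psi> b"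
    obtain k where k: "\<And>j. ?\<chi> (?\<psi> a) j = a j + 2 * k * sigma n j" using LR[OF a] unfolding rel_def by blast
    obtain m where m: "\<And>j. ?\<chi> (?\<psi> b) j = b j + 2 * m * sigma n j" using LR[OF b] unfolding rel_def by blast
    have ab: "a = (\<lambda>j. b j + (2 * m - 2 * k) * sigma n j)"
    proof
      fix j show "a j = b j + (2 * m - 2 * k) * sigma n j" using k[of j] m[of j] e by (simp add: algebra_simps)
    qed
    have "?\<psi> a = (\<lambda>j. ?\<psi> b j + (2 * m - 2 * k) * sigma n j)"
      using arg_cong[OF ab, of ?\<psi>] lin_lin[of n u b "2 * m - 2 * k" "sigma n"] sig(1) by simp
    then have "?\<psi> a 0 = ?\<psi> b 0 + (2 * m - 2 * k) * sigma n 0" by (rule fun_cong)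
    then have "?\<psi> b 0 = ?\<psi> b 0 + (2 * m - 2 * k) * sigma n 0" using e by simp
    then have "m = k" using s0 by simp
    then show "a = b" using ab by simp
  qed
  show ?thesis
  proof (intro bexI[of _ ?\<psi>] conjI ballI)
    show "?\<psi> \<in> iso (H1hat n) (H1hat n)" unfolding iso_def
      using lin_hom[of n u] uC injp surj by (simp add: bij_betw_def)
    show "?\<psi> (sigma n) = sigma n" by (rule sig)
    fix v assume "v \<in> carrier (H1hat n)"
    then show "proj n (?\<psi> v) = \<phi> (proj n v)" using u by blast
  qed
qed

end
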